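(* Let $\mathscr{A}\in\mathbb{R}^{n_1\times n_2\times n_3}$, $\mathscr{B}\in\mathbb{R}^{n_1\times s\times n_3}$, and suppose $k$ steps of the tensor tubal-global Golub–Kahan algorithm described in the context have been run (without breakdown). Then the tensors $\mathscr{V}_i$ and the tensors $\mathscr{U}_i$ produced are each T-orthonormal: $\langle\mathscr{V}_i,\mathscr{V}_j\rangle_T=\langle\mathscr{U}_i,\mathscr{U}_j\rangle_T=\mathbf{e}$ if $i=j$ and $=\mathbf{o}$ if $i\neq j$.
   Context: All tensors are real third-order arrays. $\widehat{\mathscr{A}}=\mathscr{A}\times_3F_{n_3}$ denotes the tensor obtained by applying the discrete Fourier transform ($F_{n_3}$ with entries $\omega^{(i-1)(j-1)}$, $\omega=e^{-2\pi\mathrm{i}/n_3}$) to each tube; its frontal slices $\hat A^{(k)}$ are the Fourier slices. T-product: $\mathscr{A}\star\mathscr{B}$ has Fourier slices $\hat A^{(k)}\hat B^{(k)}$. Transpose $\mathscr{A}^T$: transpose each frontal slice and reverse the order of frontal slices $2,\dots,n_3$. A tube is an element of $\mathbb{R}^{1\times1\times n_3}$; $\mathbf{e}$ has entries $(1,0,\dots,0)$, $\mathbf{o}$ is the zero tube. For a tube $\mathbf{a}$, $\mathbf{a}\divideontimes\mathscr{W}$ has $(i,j)$ tube $\mathbf{a}\star\mathscr{W}(i,j,:)$. T-trace: tube whose $k$-th Fourier slice is the trace of the $k$-th Fourier slice. Tubal inner product $\langle\mathscr{X},\mathscr{Y}\rangle_T=\text{T-trace}(\mathscr{X}^T\star\mathscr{Y})$.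 Normalization of $\mathscr{W}$: $\mathbf{a}$ is the tube with $k$-th Fourier coefficient $\|\hat W^{(k)}\|_F$ (breakdown if one is zero) and $\mathscr{Q}$ has Fourier slices $\hat W^{(k)}/\|\hat W^{(k)}\|_F$; output $[\mathscr{Q},\mathbf{a}]$. Tubal-global Golub–Kahan algorithm: $\mathscr{V}_0=0\in\mathbb{R}^{n_2\times s\times n_3}$, $[\mathscr{U}_1,\mathbf{a}_1]=\mathrm{Normalization}(\mathscr{B})$; for $j=1,\dots,k$: $\widetilde{\mathscr{V}}=\mathscr{A}^T\star\mathscr{U}_j-\mathbf{a}_j\divideontimes\mathscr{V}_{j-1}$, $[\mathscr{V}_j,\mathbf{b}_j]=\mathrm{Normalization}(\widetilde{\mathscr{V}})$, $\widetilde{\mathscr{U}}=\mathscr{A}\star\mathscr{V}_j-\mathbf{b}_j\divideontimes\mathscr{U}_j$, $[\mathscr{U}_{j+1},\mathbf{a}_{j+1}]=\mathrm{Normalization}(\widetilde{\mathscr{U}})$. *)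

theory Defs
  imports Complex_Main
begin

text \<open>Third-order real tensors are represented as functions of three 0-based indices
  (row i, column j, frontal slice l); dimensions are carried explicitly.
  A tube is a 1 x 1 x n3 tensor (only index 0 0 l is relevant).\<close>

type_synonym tens = "nat \<Rightarrow> nat \<Rightarrow> nat \<Rightarrow> real"

definition cdft :: "nat \<Rightarrow> (nat \<Rightarrow> complex) \<Rightarrow> nat \<Rightarrow> complex" where
  "cdft n x k = (\<Sum>l<n. x l * cis (- 2 * pi * real k * real l / real n))"

definition cidft :: "nat \<Rightarrow> (nat \<Rightarrow> complex) \<Rightarrow> nat \<Rightarrow> complex" where
  "cidft n y l = (\<Sum>k<n. y k * cis (2 * pi * real k * real l / real n)) / of_nat n"

definition hat :: "nat \<Rightarrow> tens \<Rightarrow> nat \<Rightarrow> nat \<Rightarrow> nat \<Rightarrow> complex" where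
  "hat n3 A i j k = cdft n3 (\<lambda>l. complex_of_real (A i j l)) k"

text \<open>Back-transform of a Fourier-domain tensor; for the conjugate-symmetric data
  arising here the result is real, so taking the real part loses nothing.\<close>
definition unhat :: "nat \<Rightarrow> (nat \<Rightarrow> nat \<Rightarrow> nat \<Rightarrow> complex) \<Rightarrow> tens" where
  "unhat n3 H i j l = Re (cidft n3 (H i j) l)"

definition tprod :: "nat \<Rightarrow> nat \<Rightarrow> tens \<Rightarrow> tens \<Rightarrow> tens" where
  "tprod m n3 A B = unhat n3 (\<lambda>i j k. \<Sum>p<m. hat n3 A i p k * hat n3 B p j k)"

definition ttransp :: "nat \<Rightarrow> tens \<Rightarrow> tens" where
  "ttransp n3 A i j l = A j i (if l = 0 then 0 else n3 - l)"

definition tube_e :: tens where "tube_e = (\<lambda>_ _ l. if l = 0 then 1 else 0)"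
definition tube_o :: tens where "tube_o = (\<lambda>_ _ _. 0)"

definition tube_smult :: "nat \<Rightarrow> tens \<Rightarrow> tens \<Rightarrow> tens" where
  "tube_smult n3 a W i j = tprod 1 n3 a (\<lambda>_ _. W i j) 0 0"

definition tsub :: "tens \<Rightarrow> tens \<Rightarrow> tens" where
  "tsub X Y i j l = X i j l - Y i j l"

definition ttrace :: "nat \<Rightarrow> nat \<Rightarrow> tens \<Rightarrow> tens" where
  "ttrace n n3 X = unhat n3 (\<lambda>_ _ k. \<Sum>i<n. hat n3 X i i k)"

definition tinner :: "nat \<Rightarrow> nat \<Rightarrow> nat \<Rightarrow> tens \<Rightarrow> tens \<Rightarrow> tens" where
  "tinner n1 n2 n3 X Y = ttrace n2 n3 (tprod n1 n3 (ttransp n3 X) Y)"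

definition slice_fnorm :: "nat \<Rightarrow> nat \<Rightarrow> nat \<Rightarrow> tens \<Rightarrow> nat \<Rightarrow> real" where
  "slice_fnorm n1 n2 n3 W k = sqrt (\<Sum>i<n1. \<Sum>j<n2. (cmod (hat n3 W i j k))\<^sup>2)"

definition breaks :: "nat \<Rightarrow> nat \<Rightarrow> nat \<Rightarrow> tens \<Rightarrow> bool" where
  "breaks n1 n2 n3 W \<longleftrightarrow> (\<exists>k<n3. slice_fnorm n1 n2 n3 W k = 0)"

definition normalization :: "nat \<Rightarrow> nat \<Rightarrow> nat \<Rightarrow> tens \<Rightarrow> tens \<times> tens" where
  "normalization n1 n2 n3 W =
     (unhat n3 (\<lambda>i j k. hat n3 W i j k / complex_of_real (slice_fnorm n1 n2 n3 W k)),
      unhat n3 (\<lambda>_ _ k. complex_of_real (slice_fnorm n1 n2 n3 W k)))"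

text \<open>Golub--Kahan. A state after j steps is (U_(j+1), a_(j+1), V_j, b_j).
  A in R^(n1 x n2 x n3), B in R^(n1 x s x n3).\<close>

definition gk_Vtil :: "tens \<Rightarrow> nat \<Rightarrow> nat \<Rightarrow> nat \<Rightarrow> tens \<times> tens \<times> tens \<times> tens \<Rightarrow> tens" where
  "gk_Vtil A n1 n2 n3 st = (case st of (U, a, V, b) \<Rightarrow>
      tsub (tprod n1 n3 (ttransp n3 A) U) (tube_smult n3 a V))"

definition gk_Util :: "tens \<Rightarrow> nat \<Rightarrow> nat \<Rightarrow> nat \<Rightarrow> nat \<Rightarrow> tens \<times> tens \<times> tens \<times> tens \<Rightarrow> tens" where
  "gk_Util A n1 n2 s n3 st = (case st of (U, a, V, b) \<Rightarrow>
      (case normalization n2 s n3 (gk_Vtil A n1 n2 n3 st) of (V', b') \<Rightarrow>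
         tsub (tprod n2 n3 A V') (tube_smult n3 b' U)))"

definition gk_step :: "tens \<Rightarrow> nat \<Rightarrow> nat \<Rightarrow> nat \<Rightarrow> nat \<Rightarrow> tens \<times> tens \<times> tens \<times> tens
    \<Rightarrow> tens \<times> tens \<times> tens \<times> tens" where
  "gk_step A n1 n2 s n3 st =
     (case normalization n2 s n3 (gk_Vtil A n1 n2 n3 st) of (V', b') \<Rightarrow>
      (case normalization n1 s n3 (gk_Util A n1 n2 s n3 st) of (U', a') \<Rightarrow>
        (U', a', V', b')))"

fun gk :: "tens \<Rightarrow> tens \<Rightarrow> nat \<Rightarrow> nat \<Rightarrow> nat \<Rightarrow> nat \<Rightarrow> nat \<Rightarrow> tens \<times> tens \<times> tens \<times> tens" where
  "gk A B n1 n2 s n3 0 =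
     (fst (normalization n1 s n3 B), snd (normalization n1 s n3 B), (\<lambda>_ _ _. 0), (\<lambda>_ _ _. 0))"
| "gk A B n1 n2 s n3 (Suc j) = gk_step A n1 n2 s n3 (gk A B n1 n2 s n3 j)"

definition gkU :: "tens \<Rightarrow> tens \<Rightarrow> nat \<Rightarrow> nat \<Rightarrow> nat \<Rightarrow> nat \<Rightarrow> nat \<Rightarrow> tens" where
  "gkU A B n1 n2 s n3 i = fst (gk A B n1 n2 s n3 (i - 1))"

definition gkV :: "tens \<Rightarrow> tens \<Rightarrow> nat \<Rightarrow> nat \<Rightarrow> nat \<Rightarrow> nat \<Rightarrow> nat \<Rightarrow> tens" where
  "gkV A B n1 n2 s n3 i = fst (snd (snd (gk A B n1 n2 s n3 i)))"

end

theory Submission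
  imports Defs
begin

definition rw :: "nat \<Rightarrow> int \<Rightarrow> complex" where
  "rw n a = cis (2 * pi * of_int a / real n)"

lemma rw_add: "rw n (a + b) = rw n a * rw n b"
  by (simp add: rw_def cis_mult add_divide_distrib distrib_left)

lemma rw_n: "n > 0 \<Longrightarrow> rw n (int n) = 1"
  by (simp add: rw_def)

lemma rw_zero[simp]: "rw n 0 = 1"
  by (simp add: rw_def)

lemma rw_cnj: "cnj (rw n a) = rw n (- a)"
  by (simp add: rw_def cis_cnj)

lemma rw_pow: "rw n (a * int l) = rw n a ^ l"
  by (simp add: rw_def DeMoivre algebra_simps)

lemma rw_mult_n: "n > 0 \<Longrightarrow> rw n (int n * q) = 1"
proof -
  assume "n > 0"
  have "2 * pi * of_int (int n * q) / real n = 2 * pi * of_int q"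
    using \<open>n > 0\<close> by simp
  then show ?thesis unfolding rw_def by simp
qed

lemma rw_eq_1: "n > 0 \<Longrightarrow> rw n m = 1 \<longleftrightarrow> int n dvd m"
proof
  assume n: "n > 0" and h: "rw n m = 1"
  then have "cos (2 * pi * of_int m / real n) = 1"
    unfolding rw_def by (metis cis.sel(1) one_complex.sel(1))
  then obtain q :: int where q: "2 * pi * of_int m / real n = of_int q * 2 * pi"
    by (auto simp: cos_one_2pi_int)
  then have "of_int m = real n * of_int q" using n by (simp add: field_simps)
  then have "m = int n * q"
    by (metis of_int_eq_iff of_int_mult of_int_of_nat_eq)
  then show "int n dvd m" by simp
next
  assume "n > 0" "int n dvd m"
  then show "rw n m = 1" using rw_mult_n by auto
qed

lemma rw_sum: assumes "n > 0"
  shows "(\<Sum>l<n. rw n (m * int l)) = (if int n dvd m then of_nat n else 0)"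
proof (cases "int n dvd m")
  case True
  then have "rw n m = 1" using rw_eq_1 assms by simp
  then show ?thesis using True by (simp add: rw_pow)
next
  case False
  then have ne: "rw n m \<noteq> 1" using rw_eq_1 assms by simp
  have "rw n m ^ n = 1" using rw_pow[of n m n, symmetric] rw_mult_n[OF assms, of m]
    by (simp add: mult.commute)
  then show ?thesis using False geometric_sum[OF ne, of n] by (simp add: rw_pow)
qed

lemma cis_rw_neg: "cis (- 2 * pi * real k * real l / real n) = rw n (- (int k * int l))"
  by (simp add: rw_def mult.assoc)

lemma cis_rw_pos: "cis (2 * pi * real k * real l / real n) = rw n (int k * int l)"
  by (simp add: rw_def mult.assoc)


lemma cdft_rw: "cdft n x k = (\<Sum>l<n. x l * rw n (- (int k * int l)))"
  unfolding cdft_def cis_rw_neg ..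

lemma cidft_rw: "cidft n y l = (\<Sum>k<n. y k * rw n (int k * int l)) / of_nat n"
  unfolding cidft_def cis_rw_pos ..

lemma rw_comb: "rw n a * rw n b = rw n (a + b)"
  by (simp add: rw_add)

lemma dvd_diff_iff: "k < n \<Longrightarrow> k' < n \<Longrightarrow> int n dvd (int k' - int k) \<longleftrightarrow> k' = k"
proof
  assume a: "k < n" "k' < n" "int n dvd (int k' - int k)"
  then obtain q where q: "int k' - int k = int n * q" by (auto elim: dvdE)
  show "k' = k"
  proof (cases "q = 0")
    case False
    then have "\<bar>int n * q\<bar> \<ge> int n" by (simp add: abs_mult mult_le_cancel_left1 int_one_le_iff_zero_less)
    then show ?thesis using q a by linarith
  qed (use q in simp)
qed simp

lemma dvd_sum_iff: "k < n \<Longrightarrow> k' < n \<Longrightarrow> int n dvd (- (int k' + int k)) \<longleftrightarrow> k' = (n - k) mod n"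
proof
  assume a: "k < n" "k' < n" "int n dvd (- (int k' + int k))"
  then obtain q where q: "int k' + int k = int n * q"
    by (metis dvd_minus_iff dvdE)
  have "q \<ge> 0"
  proof (rule ccontr)
    assume "\<not> q \<ge> 0"
    then have "int n * q < 0" using a by (simp add: mult_pos_neg)
    then show False using q by simp
  qed
  moreover have "q < 2"
  proof (rule ccontr)
    assume "\<not> q < 2"
    then have "int n * q \<ge> int n * 2" using a by (intro mult_left_mono) auto
    then show False using q a by linarith
  qed
  ultimately have "q = 0 \<or> q = 1" by auto
  then show "k' = (n - k) mod n"
  proof
    assume "q = 0" then have "k' = 0" "k = 0" using q by auto
    then show ?thesis by simp
  next
    assume "q = 1" then have "k' = n - k" "k \<noteq> 0" using q a by auto
    then show ?thesis using a by simp
  qed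
next
  assume a: "k < n" "k' < n" "k' = (n - k) mod n"
  show "int n dvd (- (int k' + int k))"
  proof (cases "k = 0")
    case True then show ?thesis using a by simp
  next
    case False then have "k' = n - k" using a by simp
    then show ?thesis using a by simp
  qed
qed

lemma re_half: "complex_of_real (Re z) = (z + cnj z) / 2"
  by (simp add: complex_add_cnj)

lemma dft_idft:
  assumes n: "n > 0" and k: "k < n"
  shows "cdft n (\<lambda>l. complex_of_real (Re (cidft n h l))) k = (h k + cnj (h ((n - k) mod n))) / 2"
proof -
  have S1: "(\<Sum>l<n. cidft n h l * rw n (- (int k * int l))) = h k"
  proof -
    have "(\<Sum>l<n. cidft n h l * rw n (- (int k * int l)))
        = (\<Sum>l<n. \<Sum>k'<n. h k' * rw n ((int k' - int k) * int l) / of_nat n)"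
      unfolding cidft_rw sum_divide_distrib sum_distrib_right
      by (intro sum.cong refl) (simp add: mult.assoc rw_comb algebra_simps)
    also have "\<dots> = (\<Sum>k'<n. h k' * (\<Sum>l<n. rw n ((int k' - int k) * int l)) / of_nat n)"
      by (subst sum.swap) (simp add: sum_distrib_left sum_divide_distrib)
    also have "\<dots> = (\<Sum>k'<n. if k' = k then h k else 0)"
    proof (intro sum.cong refl)
      fix x assume "x \<in> {..<n}"
      then have x: "x < n" by simp
      have "(\<Sum>l<n. rw n ((int x - int k) * int l)) = (if x = k then of_nat n else 0)"
        unfolding rw_sum[OF n] dvd_diff_iff[OF k x] by (rule refl)
      then show "h x * (\<Sum>l<n. rw n ((int x - int k) * int l)) / of_nat n
          = (if x = k then h k else 0)" using n by simp
    qed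
    also have "\<dots> = h k" using k by simp
    finally show ?thesis .
  qed
  have S2: "(\<Sum>l<n. cnj (cidft n h l) * rw n (- (int k * int l))) = cnj (h ((n - k) mod n))"
  proof -
    have "(\<Sum>l<n. cnj (cidft n h l) * rw n (- (int k * int l)))
        = (\<Sum>l<n. \<Sum>k'<n. cnj (h k') * rw n ((- (int k' + int k)) * int l) / of_nat n)"
      unfolding cidft_rw sum_divide_distrib sum_distrib_right cnj_sum complex_cnj_divide complex_cnj_mult rw_cnj
      by (intro sum.cong refl) (simp add: mult.assoc rw_comb algebra_simps)
    also have "\<dots> = (\<Sum>k'<n. cnj (h k') * (\<Sum>l<n. rw n ((- (int k' + int k)) * int l)) / of_nat n)"
      by (subst sum.swap) (simp add: sum_distrib_left sum_divide_distrib)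
    also have "\<dots> = (\<Sum>k'<n. if k' = (n - k) mod n then cnj (h ((n - k) mod n)) else 0)"
    proof (intro sum.cong refl)
      fix x assume "x \<in> {..<n}"
      then have x: "x < n" by simp
      have "(\<Sum>l<n. rw n ((- (int x + int k)) * int l)) = (if x = (n - k) mod n then of_nat n else 0)"
        unfolding rw_sum[OF n] dvd_sum_iff[OF k x] by (rule refl)
      then show "cnj (h x) * (\<Sum>l<n. rw n ((- (int x + int k)) * int l)) / of_nat n
          = (if x = (n - k) mod n then cnj (h ((n - k) mod n)) else 0)" using n by simp
    qed
    also have "\<dots> = cnj (h ((n - k) mod n))" using n by simp
    finally show ?thesis .
  qed
  have "cdft n (\<lambda>l. complex_of_real (Re (cidft n h l))) k
      = ((\<Sum>l<n. cidft n h l * rw n (- (int k * int l))) + (\<Sum>l<n. cnj (cidft n h l) * rw n (- (int k * int l)))) / 2"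
    unfolding cdft_rw re_half by (simp add: sum.distrib[symmetric] sum_divide_distrib algebra_simps)
  then show ?thesis using S1 S2 by simp
qed


lemma hat_unhat:
  assumes "n > 0" "k < n" "H i j ((n - k) mod n) = cnj (H i j k)"
  shows "hat n (unhat n H) i j k = H i j k"
proof -
  have "hat n (unhat n H) i j k = cdft n (\<lambda>l. complex_of_real (Re (cidft n (H i j) l))) k"
    by (simp add: hat_def unhat_def)
  also have "\<dots> = (H i j k + cnj (H i j ((n - k) mod n))) / 2" by (rule dft_idft[OF assms(1,2)])
  also have "\<dots> = H i j k" using assms(3) by simp
  finally show ?thesis .
qed

lemma rw_diff: "rw n (a - b) = rw n a * rw n (- b)"
  using rw_add[of n a "- b"] by simp

lemma rw_neg_pow: "rw n (- (a * int l)) = rw n (- a) ^ l"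
  by (metis rw_pow minus_mult_left)

lemma rw_refl_idx:
  assumes "n > 0" "k < n"
  shows "rw n (- int ((n - k) mod n)) = rw n (int k)"
proof (cases "k = 0")
  case True then show ?thesis by simp
next
  case False
  then have "(n - k) mod n = n - k" using assms by simp
  then have "- int ((n - k) mod n) = int k + (- int n)" using assms by simp
  moreover have "rw n (- int n) = 1" using rw_n[OF assms(1)] rw_cnj[of n "int n"] by simp
  ultimately show ?thesis by (simp add: rw_diff)
qed

lemma hat_csym:
  assumes "n > 0" "k < n"
  shows "hat n X i j ((n - k) mod n) = cnj (hat n X i j k)"
proof -
  have "hat n X i j ((n - k) mod n) = (\<Sum>l<n. complex_of_real (X i j l) * rw n (int k) ^ l)"
    unfolding hat_def cdft_rw rw_neg_pow rw_refl_idx[OF assms] ..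
  also have "\<dots> = cnj (hat n X i j k)"
    unfolding hat_def cdft_rw cnj_sum complex_cnj_mult rw_neg_pow complex_cnj_power by (simp add: rw_cnj)
  finally show ?thesis .
qed

lemma hat_tprod:
  assumes "n > 0" "k < n"
  shows "hat n (tprod m n A B) i j k = (\<Sum>p<m. hat n A i p k * hat n B p j k)"
  unfolding tprod_def
  by (rule hat_unhat[OF assms]) (simp add: hat_csym[OF assms] cnj_sum)

lemma hat_tsub: "hat n (tsub X Y) i j k = hat n X i j k - hat n Y i j k"
  by (simp add: hat_def cdft_def tsub_def sum_subtractf[symmetric] algebra_simps)

lemma hat_ttransp:
  assumes n: "n > 0" and k: "k < n"
  shows "hat n (ttransp n X) i j k = cnj (hat n X j i k)"
proof -
  define f where "f l = (if l = 0 then 0 else n - l)" for l :: nat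
  have "hat n (ttransp n X) i j k = (\<Sum>l<n. complex_of_real (X j i (f l)) * rw n (- (int k * int l)))"
    unfolding hat_def cdft_rw ttransp_def f_def ..
  also have "\<dots> = (\<Sum>l<n. complex_of_real (X j i l) * rw n (int k * int l))"
  proof (rule sum.reindex_bij_witness[of _ f f])
    fix a assume "a \<in> {..<n}" then show "f (f a) = a" "f a \<in> {..<n}" using n by (auto simp: f_def)
  next
    fix a assume "a \<in> {..<n}" then show "f (f a) = a" "f a \<in> {..<n}" using n by (auto simp: f_def)
  next
    fix a assume a: "a \<in> {..<n}"
    have "rw n (- (int k * int a)) = rw n (int k * int (f a))"
    proof (cases "a = 0")
      case False
      then have "int k * int (f a) = - (int k * int a) + int n * int k" using a by (simp add: f_def algebra_simps)
      then show ?thesis using rw_mult_n[OF n] by (simp add: rw_diff)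
    qed (simp add: f_def)
    then show "complex_of_real (X j i (f a)) * rw n (int k * int (f a))
          = complex_of_real (X j i (f a)) * rw n (- (int k * int a))"
      by simp
  qed
  also have "\<dots> = cnj (hat n X j i k)"
    unfolding hat_def cdft_rw cnj_sum complex_cnj_mult rw_cnj by simp
  finally show ?thesis .
qed

lemma hat_smult:
  assumes "n > 0" "k < n"
  shows "hat n (tube_smult n a V) i j k = hat n a 0 0 k * hat n V i j k"
proof -
  have "hat n (tube_smult n a V) i j k = hat n (tprod 1 n a (\<lambda>_ _. V i j)) 0 0 k"
    by (simp add: hat_def tube_smult_def)
  also have "\<dots> = hat n a 0 0 k * hat n V i j k"
    by (simp add: hat_tprod[OF assms]) (simp add: hat_def)
  finally show ?thesis .
qed

lemma fnorm_sym:
  assumes "n > 0" "k < n"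
  shows "slice_fnorm n1 n2 n W ((n - k) mod n) = slice_fnorm n1 n2 n W k"
  unfolding slice_fnorm_def by (simp add: hat_csym[OF assms])

lemma hat_norm_fst:
  assumes "n > 0" "k < n"
  shows "hat n (fst (normalization n1 n2 n W)) i j k = hat n W i j k / complex_of_real (slice_fnorm n1 n2 n W k)"
  unfolding normalization_def fst_conv
  by (rule hat_unhat[OF assms]) (simp add: hat_csym[OF assms] fnorm_sym[OF assms])

lemma hat_norm_snd:
  assumes "n > 0" "k < n"
  shows "hat n (snd (normalization n1 n2 n W)) i j k = complex_of_real (slice_fnorm n1 n2 n W k)"
  unfolding normalization_def snd_conv
  by (rule hat_unhat[OF assms]) (simp add: fnorm_sym[OF assms])

lemma cidft_cong: "(\<And>k. k < n \<Longrightarrow> f k = g k) \<Longrightarrow> cidft n f l = cidft n g l"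
  unfolding cidft_def by (intro arg_cong2[where f="(/)"] sum.cong refl) auto

lemma tinner_eval:
  assumes "n > 0"
  shows "tinner n1 n2 n X Y 0 0 l
     = Re (cidft n (\<lambda>k. \<Sum>i<n2. \<Sum>p<n1. cnj (hat n X p i k) * hat n Y p i k) l)"
  unfolding tinner_def ttrace_def unhat_def
  by (intro arg_cong[where f=Re] cidft_cong) (simp add: hat_tprod[OF assms] hat_ttransp[OF assms])

lemma cidft_one:
  assumes "n > 0" "l < n"
  shows "Re (cidft n (\<lambda>k. 1) l) = tube_e 0 0 l"
proof -
  have "cidft n (\<lambda>k. 1) l = (\<Sum>k<n. rw n (int l * int k)) / of_nat n"
    unfolding cidft_rw by (simp add: mult.commute)
  also have "\<dots> = (if l = 0 then 1 else 0)"
    unfolding rw_sum[OF assms(1)] using assms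
    by (auto dest: dvd_imp_le)
  finally show ?thesis by (simp add: tube_e_def)
qed

lemma cidft_zero: "Re (cidft n (\<lambda>k. 0) l) = tube_o 0 0 l"
  by (simp add: cidft_def tube_o_def)


definition ip :: "nat \<Rightarrow> nat \<Rightarrow> (nat \<Rightarrow> nat \<Rightarrow> complex) \<Rightarrow> (nat \<Rightarrow> nat \<Rightarrow> complex) \<Rightarrow> complex" where
  "ip m s X Y = (\<Sum>q<s. \<Sum>p<m. cnj (X p q) * Y p q)"

definition mA :: "nat \<Rightarrow> (nat \<Rightarrow> nat \<Rightarrow> complex) \<Rightarrow> (nat \<Rightarrow> nat \<Rightarrow> complex) \<Rightarrow> nat \<Rightarrow> nat \<Rightarrow> complex" where
  "mA n2 Ah Y p q = (\<Sum>r<n2. Ah p r * Y r q)"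

definition mAH :: "nat \<Rightarrow> (nat \<Rightarrow> nat \<Rightarrow> complex) \<Rightarrow> (nat \<Rightarrow> nat \<Rightarrow> complex) \<Rightarrow> nat \<Rightarrow> nat \<Rightarrow> complex" where
  "mAH n1 Ah X p q = (\<Sum>r<n1. cnj (Ah r p) * X r q)"

lemma ip_sym: "ip m s Y X = cnj (ip m s X Y)"
  by (simp add: ip_def cnj_sum mult.commute)

lemma ip_adj: "ip n2 s X (mAH n1 Ah Y) = ip n1 s (mA n2 Ah X) Y"
proof -
  have "ip n2 s X (mAH n1 Ah Y) = (\<Sum>q<s. \<Sum>p<n2. \<Sum>r<n1. cnj (X p q) * cnj (Ah r p) * Y r q)"
    by (simp add: ip_def mAH_def sum_distrib_left mult.assoc)
  also have "\<dots> = (\<Sum>q<s. \<Sum>r<n1. \<Sum>p<n2. cnj (X p q) * cnj (Ah r p) * Y r q)"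
    by (rule sum.cong[OF refl]) (rule sum.swap)
  also have "\<dots> = ip n1 s (mA n2 Ah X) Y"
    by (simp add: ip_def mA_def sum_distrib_right sum_distrib_left cnj_sum mult.commute mult.left_commute)
  finally show ?thesis .
qed

lemma ip_adj2: "ip n1 s Y (mA n2 Ah X) = ip n2 s (mAH n1 Ah Y) X"
  by (metis ip_adj ip_sym)

lemma ip_right_comb:
  assumes "\<forall>p<m. \<forall>q<s. c * Y p q = Z p q - d * W p q"
  shows "c * ip m s X Y = ip m s X Z - d * ip m s X W"
proof -
  have "c * ip m s X Y = (\<Sum>q<s. \<Sum>p<m. cnj (X p q) * (c * Y p q))"
    by (simp add: ip_def sum_distrib_left algebra_simps)
  also have "\<dots> = (\<Sum>q<s. \<Sum>p<m. cnj (X p q) * Z p q - d * (cnj (X p q) * W p q))"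
  proof (intro sum.cong refl)
    fix q p assume "q \<in> {..<s}" "p \<in> {..<m}"
    then have e: "c * Y p q = Z p q - d * W p q" using assms by auto
    show "cnj (X p q) * (c * Y p q) = cnj (X p q) * Z p q - d * (cnj (X p q) * W p q)"
      unfolding e by (simp add: algebra_simps)
  qed
  also have "\<dots> = ip m s X Z - d * ip m s X W"
    by (simp add: ip_def sum_subtractf sum_distrib_left)
  finally show ?thesis .
qed

lemma ip_left_comb:
  assumes "\<forall>p<m. \<forall>q<s. Y p q = complex_of_real c * Z p q + complex_of_real d * W p q"
  shows "ip m s Y X = complex_of_real c * ip m s Z X + complex_of_real d * ip m s W X"
proof -
  have "ip m s Y X = (\<Sum>q<s. \<Sum>p<m. complex_of_real c * (cnj (Z p q) * X p q) + complex_of_real d * (cnj (W p q) * X p q))"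
    unfolding ip_def using assms by (intro sum.cong refl) (simp add: algebra_simps)
  also have "\<dots> = complex_of_real c * ip m s Z X + complex_of_real d * ip m s W X"
    by (simp add: ip_def sum.distrib sum_distrib_left)
  finally show ?thesis .
qed

lemma ip_zero: "(\<forall>p q. Y p q = 0) \<Longrightarrow> ip m s Y X = 0"
  by (simp add: ip_def)

lemma gk_orth:
  fixes Ah :: "nat \<Rightarrow> nat \<Rightarrow> complex" and u v :: "nat \<Rightarrow> nat \<Rightarrow> nat \<Rightarrow> complex"
    and al be :: "nat \<Rightarrow> real"
  assumes v0: "\<forall>p q. v 0 p q = 0"
    and u1: "ip n1 s (u 1) (u 1) = 1"
    and hv: "\<forall>j. 1 \<le> j \<and> j \<le> K \<longrightarrow> be j \<noteq> 0 \<and> ip n2 s (v j) (v j) = 1 \<and>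
        (\<forall>p<n2. \<forall>q<s. complex_of_real (be j) * v j p q = mAH n1 Ah (u j) p q - complex_of_real (al j) * v (j - 1) p q)"
    and hu: "\<forall>j. 1 \<le> j \<and> j \<le> K \<longrightarrow> al (Suc j) \<noteq> 0 \<and> ip n1 s (u (Suc j)) (u (Suc j)) = 1 \<and>
        (\<forall>p<n1. \<forall>q<s. complex_of_real (al (Suc j)) * u (Suc j) p q = mA n2 Ah (v j) p q - complex_of_real (be j) * u j p q)"
  shows "\<forall>j\<le>K. (\<forall>a b. 1 \<le> a \<and> a \<le> j + 1 \<and> 1 \<le> b \<and> b \<le> j + 1 \<longrightarrow> ip n1 s (u a) (u b) = (if a = b then 1 else 0))
             \<and> (\<forall>a b. 1 \<le> a \<and> a \<le> j \<and> 1 \<le> b \<and> b \<le> j \<longrightarrow> ip n2 s (v a) (v b) = (if a = b then 1 else 0))"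
proof (intro allI impI)
  fix j assume "j \<le> K"
  then show "(\<forall>a b. 1 \<le> a \<and> a \<le> j + 1 \<and> 1 \<le> b \<and> b \<le> j + 1 \<longrightarrow> ip n1 s (u a) (u b) = (if a = b then 1 else 0))
             \<and> (\<forall>a b. 1 \<le> a \<and> a \<le> j \<and> 1 \<le> b \<and> b \<le> j \<longrightarrow> ip n2 s (v a) (v b) = (if a = b then 1 else 0))"
  proof (induction j)
    case 0
    then show ?case using u1 by auto
  next
    case (Suc j)
    define J where "J = Suc j"
    have JK: "J \<le> K" using Suc.prems J_def by simp
    from Suc.IH have OU: "\<And>a b. 1 \<le> a \<Longrightarrow> a \<le> J \<Longrightarrow> 1 \<le> b \<Longrightarrow> b \<le> J \<Longrightarrow> ip n1 s (u a) (u b) = (if a = b then 1 else 0)"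
      and OV: "\<And>a b. 1 \<le> a \<Longrightarrow> a \<le> j \<Longrightarrow> 1 \<le> b \<Longrightarrow> b \<le> j \<Longrightarrow> ip n2 s (v a) (v b) = (if a = b then 1 else 0)"
      using Suc.prems J_def by auto
    from hv JK have beJ: "be J \<noteq> 0" and vJJ: "ip n2 s (v J) (v J) = 1"
      and vJ: "\<forall>p<n2. \<forall>q<s. complex_of_real (be J) * v J p q = mAH n1 Ah (u J) p q - complex_of_real (al J) * v j p q"
      unfolding J_def by auto
    have vorth: "ip n2 s (v i) (v J) = 0" if i: "1 \<le> i" "i \<le> j" for i
    proof -
      have "complex_of_real (be J) * ip n2 s (v i) (v J) = ip n2 s (v i) (mAH n1 Ah (u J)) - complex_of_real (al J) * ip n2 s (v i) (v j)"
        by (rule ip_right_comb[OF vJ])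
      also have "ip n2 s (v i) (mAH n1 Ah (u J)) = ip n1 s (mA n2 Ah (v i)) (u J)" by (rule ip_adj)
      also have "\<dots> = complex_of_real (al (Suc i)) * ip n1 s (u (Suc i)) (u J) + complex_of_real (be i) * ip n1 s (u i) (u J)"
      proof (rule ip_left_comb)
        from hu i JK have "\<forall>p<n1. \<forall>q<s. complex_of_real (al (Suc i)) * u (Suc i) p q = mA n2 Ah (v i) p q - complex_of_real (be i) * u i p q"
          unfolding J_def by auto
        then show "\<forall>p<n1. \<forall>q<s. mA n2 Ah (v i) p q = complex_of_real (al (Suc i)) * u (Suc i) p q + complex_of_real (be i) * u i p q"
          by (auto simp: algebra_simps)
      qed
      also have "ip n1 s (u (Suc i)) (u J) = (if i = j then 1 else 0)" using OU[of "Suc i" J] i J_def by auto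
      also have "ip n1 s (u i) (u J) = 0" using OU[of i J] i J_def by auto
      also have "ip n2 s (v i) (v j) = (if i = j then 1 else 0)" using OV[of i j] i by auto
      finally have "complex_of_real (be J) * ip n2 s (v i) (v J) = 0" using J_def by auto
      then show ?thesis using beJ by simp
    qed
    have OV': "ip n2 s (v a) (v b) = (if a = b then 1 else 0)" if "1 \<le> a" "a \<le> J" "1 \<le> b" "b \<le> J" for a b
    proof (cases "a = J")
      case True
      then show ?thesis
      proof (cases "b = J")
        case False then have "ip n2 s (v b) (v J) = 0" using vorth that J_def by auto
        then show ?thesis using True False ip_sym[of n2 s "v J" "v b"] by simp
      qed (use vJJ in simp)
    next
      case False
      then show ?thesis
      proof (cases "b = J")
        case True then show ?thesis using vorth that J_def False by auto
      qed (use OV that J_def in auto)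
    qed
    from hu JK have alJ: "al (Suc J) \<noteq> 0" and uJJ: "ip n1 s (u (Suc J)) (u (Suc J)) = 1"
      and uJ: "\<forall>p<n1. \<forall>q<s. complex_of_real (al (Suc J)) * u (Suc J) p q = mA n2 Ah (v J) p q - complex_of_real (be J) * u J p q"
      unfolding J_def by auto
    have uorth: "ip n1 s (u i) (u (Suc J)) = 0" if i: "1 \<le> i" "i \<le> J" for i
    proof -
      have "complex_of_real (al (Suc J)) * ip n1 s (u i) (u (Suc J)) = ip n1 s (u i) (mA n2 Ah (v J)) - complex_of_real (be J) * ip n1 s (u i) (u J)"
        by (rule ip_right_comb[OF uJ])
      also have "ip n1 s (u i) (mA n2 Ah (v J)) = ip n2 s (mAH n1 Ah (u i)) (v J)" by (rule ip_adj2)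
      also have "\<dots> = complex_of_real (be i) * ip n2 s (v i) (v J) + complex_of_real (al i) * ip n2 s (v (i - 1)) (v J)"
      proof (rule ip_left_comb)
        from hv i JK have "\<forall>p<n2. \<forall>q<s. complex_of_real (be i) * v i p q = mAH n1 Ah (u i) p q - complex_of_real (al i) * v (i - 1) p q"
          by auto
        then show "\<forall>p<n2. \<forall>q<s. mAH n1 Ah (u i) p q = complex_of_real (be i) * v i p q + complex_of_real (al i) * v (i - 1) p q"
          by (auto simp: algebra_simps)
      qed
      also have "ip n2 s (v i) (v J) = (if i = J then 1 else 0)" using OV'[of i J] i by auto
      also have "ip n2 s (v (i - 1)) (v J) = 0"
      proof (cases "i = 1")
        case True then show ?thesis using v0 ip_zero by simp
      next
        case False then show ?thesis using OV'[of "i - 1" J] i by auto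
      qed
      also have "ip n1 s (u i) (u J) = (if i = J then 1 else 0)" using OU[of i J] i J_def by auto
      finally have "complex_of_real (al (Suc J)) * ip n1 s (u i) (u (Suc J)) = 0" by auto
      then show ?thesis using alJ by simp
    qed
    have OU': "ip n1 s (u a) (u b) = (if a = b then 1 else 0)" if "1 \<le> a" "a \<le> Suc J" "1 \<le> b" "b \<le> Suc J" for a b
    proof (cases "a = Suc J")
      case True
      then show ?thesis
      proof (cases "b = Suc J")
        case False then have "ip n1 s (u b) (u (Suc J)) = 0" using uorth that by auto
        then show ?thesis using True False ip_sym[of n1 s "u (Suc J)" "u b"] by simp
      qed (use uJJ in simp)
    next
      case False
      then show ?thesis
      proof (cases "b = Suc J")
        case True then show ?thesis using uorth that False by auto
      qed (use OU that in auto)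
    qed
    show ?case using OU' OV' J_def by auto
  qed
qed


lemma cnj_mult_self: "cnj z * z = complex_of_real ((cmod z)\<^sup>2)"
  by (subst complex_norm_square) (simp add: mult.commute)

lemma norm_unit:
  assumes "slice_fnorm m s n W k \<noteq> 0"
  shows "ip m s (\<lambda>p q. hat n W p q k / complex_of_real (slice_fnorm m s n W k))
                (\<lambda>p q. hat n W p q k / complex_of_real (slice_fnorm m s n W k)) = 1"
proof -
  define f where "f = slice_fnorm m s n W k"
  have f2: "f\<^sup>2 = (\<Sum>i<m. \<Sum>j<s. (cmod (hat n W i j k))\<^sup>2)"
    unfolding f_def slice_fnorm_def by (simp add: sum_nonneg)
  have "ip m s (\<lambda>p q. hat n W p q k / complex_of_real f) (\<lambda>p q. hat n W p q k / complex_of_real f)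
      = (\<Sum>q<s. \<Sum>p<m. complex_of_real ((cmod (hat n W p q k))\<^sup>2) / complex_of_real (f\<^sup>2))"
    unfolding ip_def
  proof (intro sum.cong refl)
    fix q p
    have "cnj (hat n W p q k / complex_of_real f) * (hat n W p q k / complex_of_real f)
        = (cnj (hat n W p q k) * hat n W p q k) / complex_of_real (f\<^sup>2)"
      by (simp add: power2_eq_square)
    then show "cnj (hat n W p q k / complex_of_real f) * (hat n W p q k / complex_of_real f)
        = complex_of_real ((cmod (hat n W p q k))\<^sup>2) / complex_of_real (f\<^sup>2)"
      by (simp only: cnj_mult_self)
  qed
  also have "\<dots> = complex_of_real ((\<Sum>p<m. \<Sum>q<s. (cmod (hat n W p q k))\<^sup>2) / f\<^sup>2)"
    by (subst sum.swap) (simp add: sum_divide_distrib)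
  also have "\<dots> = 1" using assms f2 unfolding f_def by (metis (no_types, lifting) div_self of_real_1 zero_eq_power2)
  finally show ?thesis unfolding f_def .
qed

lemma gk_Suc_eq:
  "gk A B n1 n2 s n3 (Suc j) =
    (fst (normalization n1 s n3 (gk_Util A n1 n2 s n3 (gk A B n1 n2 s n3 j))),
     snd (normalization n1 s n3 (gk_Util A n1 n2 s n3 (gk A B n1 n2 s n3 j))),
     fst (normalization n2 s n3 (gk_Vtil A n1 n2 n3 (gk A B n1 n2 s n3 j))),
     snd (normalization n2 s n3 (gk_Vtil A n1 n2 n3 (gk A B n1 n2 s n3 j))))"
  by (simp add: gk_step_def split: prod.split)

lemma Vtil_eq: "gk_Vtil A n1 n2 n3 st =
   tsub (tprod n1 n3 (ttransp n3 A) (fst st)) (tube_smult n3 (fst (snd st)) (fst (snd (snd st))))"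
  by (simp add: gk_Vtil_def split: prod.split)

lemma Util_eq: "gk_Util A n1 n2 s n3 st =
   tsub (tprod n2 n3 A (fst (normalization n2 s n3 (gk_Vtil A n1 n2 n3 st))))
        (tube_smult n3 (snd (normalization n2 s n3 (gk_Vtil A n1 n2 n3 st))) (fst st))"
  by (simp add: gk_Util_def split: prod.split)

lemma slice_orth:
  fixes A B :: tens and n1 n2 n3 s k :: nat
  assumes n: "n3 > 0" and k0: "k0 < n3"
  assumes nbB: "\<not> breaks n1 s n3 B"
    and nb: "\<forall>j<k. \<not> breaks n2 s n3 (gk_Vtil A n1 n2 n3 (gk A B n1 n2 s n3 j))
              \<and> \<not> breaks n1 s n3 (gk_Util A n1 n2 s n3 (gk A B n1 n2 s n3 j))"
  shows "(\<forall>a b. 1 \<le> a \<and> a \<le> k + 1 \<and> 1 \<le> b \<and> b \<le> k + 1 \<longrightarrow>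
            ip n1 s (\<lambda>p q. hat n3 (gkU A B n1 n2 s n3 a) p q k0) (\<lambda>p q. hat n3 (gkU A B n1 n2 s n3 b) p q k0) = (if a = b then 1 else 0))
       \<and> (\<forall>a b. 1 \<le> a \<and> a \<le> k \<and> 1 \<le> b \<and> b \<le> k \<longrightarrow>
            ip n2 s (\<lambda>p q. hat n3 (gkV A B n1 n2 s n3 a) p q k0) (\<lambda>p q. hat n3 (gkV A B n1 n2 s n3 b) p q k0) = (if a = b then 1 else 0))"
proof -
  define st where "st j = gk A B n1 n2 s n3 j" for j
  define Vt where "Vt j = gk_Vtil A n1 n2 n3 (st j)" for j
  define Ut where "Ut j = gk_Util A n1 n2 s n3 (st j)" for j
  define u where "u j = (\<lambda>p q. hat n3 (gkU A B n1 n2 s n3 j) p q k0)" for j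
  define v where "v j = (\<lambda>p q. hat n3 (gkV A B n1 n2 s n3 j) p q k0)" for j
  define al where "al j = (case j of 0 \<Rightarrow> 0 | Suc 0 \<Rightarrow> slice_fnorm n1 s n3 B k0
                                 | Suc (Suc i) \<Rightarrow> slice_fnorm n1 s n3 (Ut i) k0)" for j
  define be where "be j = (case j of 0 \<Rightarrow> 0 | Suc i \<Rightarrow> slice_fnorm n2 s n3 (Vt i) k0)" for j
  define Ah where "Ah = (\<lambda>r p. hat n3 A r p k0)"
  have stS: "st (Suc j) = (fst (normalization n1 s n3 (Ut j)), snd (normalization n1 s n3 (Ut j)),
       fst (normalization n2 s n3 (Vt j)), snd (normalization n2 s n3 (Vt j)))" for j
    unfolding st_def Ut_def Vt_def by (rule gk_Suc_eq)
  have st0: "st 0 = (fst (normalization n1 s n3 B), snd (normalization n1 s n3 B), (\<lambda>_ _ _. 0), (\<lambda>_ _ _. 0))"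
    unfolding st_def by simp
  have ahat: "hat n3 (fst (snd (st j))) 0 0 k0 = complex_of_real (al (Suc j))" for j
    by (cases j) (simp_all add: st0 stS al_def hat_norm_snd[OF n k0])
  have fB: "slice_fnorm n1 s n3 B k0 \<noteq> 0" using nbB k0 by (auto simp: breaks_def)
  have fV: "slice_fnorm n2 s n3 (Vt j) k0 \<noteq> 0" if "j < k" for j
    using nb that k0 by (auto simp: breaks_def Vt_def st_def)
  have fU: "slice_fnorm n1 s n3 (Ut j) k0 \<noteq> 0" if "j < k" for j
    using nb that k0 by (auto simp: breaks_def Ut_def st_def)
  have uS: "u (Suc j) = (\<lambda>p q. hat n3 (fst (st j)) p q k0)" for j
    by (simp add: u_def gkU_def st_def)
  have vS: "v j = (\<lambda>p q. hat n3 (fst (snd (snd (st j)))) p q k0)" for j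
    by (simp add: v_def gkV_def st_def)
  have hVt: "hat n3 (Vt j) p q k0 = mAH n1 Ah (u (Suc j)) p q - complex_of_real (al (Suc j)) * v j p q" for j p q
    unfolding Vt_def Vtil_eq hat_tsub hat_tprod[OF n k0] hat_smult[OF n k0] hat_ttransp[OF n k0]
    by (simp add: mAH_def Ah_def uS vS ahat)
  have hUt: "hat n3 (Ut j) p q k0 = mA n2 Ah (v (Suc j)) p q - complex_of_real (be (Suc j)) * u (Suc j) p q" for j p q
    unfolding Ut_def Util_eq hat_tsub hat_tprod[OF n k0] hat_smult[OF n k0] hat_norm_snd[OF n k0]
    by (simp add: mA_def Ah_def uS vS stS be_def Vt_def)
  have v0: "\<forall>p q. v 0 p q = 0" by (simp add: vS st0 hat_def cdft_def)
  have u1: "ip n1 s (u 1) (u 1) = 1"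
    using norm_unit[OF fB] by (simp add: uS st0 hat_norm_fst[OF n k0])
  have hv: "\<forall>j. 1 \<le> j \<and> j \<le> k \<longrightarrow> be j \<noteq> 0 \<and> ip n2 s (v j) (v j) = 1 \<and>
        (\<forall>p<n2. \<forall>q<s. complex_of_real (be j) * v j p q = mAH n1 Ah (u j) p q - complex_of_real (al j) * v (j - 1) p q)"
  proof (intro allI impI)
    fix J assume J: "1 \<le> J \<and> J \<le> k"
    then obtain j where j: "J = Suc j" "j < k" by (cases J) auto
    have vJ: "v (Suc j) = (\<lambda>p q. hat n3 (Vt j) p q k0 / complex_of_real (slice_fnorm n2 s n3 (Vt j) k0))"
      by (simp add: vS stS hat_norm_fst[OF n k0])
    have bJ: "be (Suc j) = slice_fnorm n2 s n3 (Vt j) k0" by (simp add: be_def)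
    show "be J \<noteq> 0 \<and> ip n2 s (v J) (v J) = 1 \<and>
        (\<forall>p<n2. \<forall>q<s. complex_of_real (be J) * v J p q = mAH n1 Ah (u J) p q - complex_of_real (al J) * v (J - 1) p q)"
      unfolding j(1) diff_Suc_1 bJ using fV[OF j(2)] norm_unit[OF fV[OF j(2)]] by (simp add: vJ hVt)
  qed
  have hu: "\<forall>j. 1 \<le> j \<and> j \<le> k \<longrightarrow> al (Suc j) \<noteq> 0 \<and> ip n1 s (u (Suc j)) (u (Suc j)) = 1 \<and>
        (\<forall>p<n1. \<forall>q<s. complex_of_real (al (Suc j)) * u (Suc j) p q = mA n2 Ah (v j) p q - complex_of_real (be j) * u j p q)"
  proof (intro allI impI)
    fix J assume J: "1 \<le> J \<and> J \<le> k"
    then obtain j where j: "J = Suc j" "j < k" by (cases J) auto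
    have uJ: "u (Suc (Suc j)) = (\<lambda>p q. hat n3 (Ut j) p q k0 / complex_of_real (slice_fnorm n1 s n3 (Ut j) k0))"
      by (simp add: uS stS hat_norm_fst[OF n k0])
    have aJ: "al (Suc (Suc j)) = slice_fnorm n1 s n3 (Ut j) k0" by (simp add: al_def)
    show "al (Suc J) \<noteq> 0 \<and> ip n1 s (u (Suc J)) (u (Suc J)) = 1 \<and>
        (\<forall>p<n1. \<forall>q<s. complex_of_real (al (Suc J)) * u (Suc J) p q = mA n2 Ah (v J) p q - complex_of_real (be J) * u J p q)"
      unfolding j(1) aJ using fU[OF j(2)] norm_unit[OF fU[OF j(2)]] by (simp add: uJ hUt)
  qed
  have "\<forall>j\<le>k. (\<forall>a b. 1 \<le> a \<and> a \<le> j + 1 \<and> 1 \<le> b \<and> b \<le> j + 1 \<longrightarrow> ip n1 s (u a) (u b) = (if a = b then 1 else 0))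
             \<and> (\<forall>a b. 1 \<le> a \<and> a \<le> j \<and> 1 \<le> b \<and> b \<le> j \<longrightarrow> ip n2 s (v a) (v b) = (if a = b then 1 else 0))"
    by (rule gk_orth[OF v0 u1 hv hu])
  then show ?thesis unfolding u_def v_def by auto
qed

theorem proposition12:
  fixes A B :: tens and n1 n2 n3 s k :: nat
  assumes "\<not> breaks n1 s n3 B"
    and "\<forall>j<k. \<not> breaks n2 s n3 (gk_Vtil A n1 n2 n3 (gk A B n1 n2 s n3 j))
              \<and> \<not> breaks n1 s n3 (gk_Util A n1 n2 s n3 (gk A B n1 n2 s n3 j))"
  shows "(\<forall>i\<in>{1..k}. \<forall>j\<in>{1..k}. \<forall>l<n3.
           tinner n2 s n3 (gkV A B n1 n2 s n3 i) (gkV A B n1 n2 s n3 j) 0 0 l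
             = (if i = j then tube_e else tube_o) 0 0 l)
       \<and> (\<forall>i\<in>{1..k+1}. \<forall>j\<in>{1..k+1}. \<forall>l<n3.
           tinner n1 s n3 (gkU A B n1 n2 s n3 i) (gkU A B n1 n2 s n3 j) 0 0 l
             = (if i = j then tube_e else tube_o) 0 0 l)"
proof (cases "n3 > 0")
  case False then show ?thesis by simp
next
  case n: True
  have key: "Re (cidft n3 (\<lambda>k. ip m s (\<lambda>p q. hat n3 X p q k) (\<lambda>p q. hat n3 Y p q k)) l)
        = (if i = j then tube_e else tube_o) 0 0 l"
    if l: "l < n3" and h: "\<And>k. k < n3 \<Longrightarrow> ip m s (\<lambda>p q. hat n3 X p q k) (\<lambda>p q. hat n3 Y p q k) = (if i = j then 1 else 0)"
    for m X Y i j l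
  proof (cases "i = j")
    case True
    have "Re (cidft n3 (\<lambda>k. ip m s (\<lambda>p q. hat n3 X p q k) (\<lambda>p q. hat n3 Y p q k)) l) = Re (cidft n3 (\<lambda>k. 1) l)"
      using h True by (intro arg_cong[where f=Re] cidft_cong) auto
    then show ?thesis using cidft_one[OF n l] True by simp
  next
    case False
    have "Re (cidft n3 (\<lambda>k. ip m s (\<lambda>p q. hat n3 X p q k) (\<lambda>p q. hat n3 Y p q k)) l) = Re (cidft n3 (\<lambda>k. 0) l)"
      using h False by (intro arg_cong[where f=Re] cidft_cong) auto
    then show ?thesis using cidft_zero False by simp
  qed
  show ?thesis
  proof (intro conjI ballI allI impI)
    fix i j l assume ij: "i \<in> {1..k}" "j \<in> {1..k}" and l: "l < n3"
    have "\<And>k0. k0 < n3 \<Longrightarrow> ip n2 s (\<lambda>p q. hat n3 (gkV A B n1 n2 s n3 i) p q k0) (\<lambda>p q. hat n3 (gkV A B n1 n2 s n3 j) p q k0) = (if i = j then 1 else 0)"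
      using slice_orth[OF n _ assms] ij by auto
    from key[of l n2 "gkV A B n1 n2 s n3 i" "gkV A B n1 n2 s n3 j" i j, OF l this]
    show "tinner n2 s n3 (gkV A B n1 n2 s n3 i) (gkV A B n1 n2 s n3 j) 0 0 l
             = (if i = j then tube_e else tube_o) 0 0 l"
      unfolding tinner_eval[OF n] by (simp add: ip_def)
  next
    fix i j l assume ij: "i \<in> {1..k+1}" "j \<in> {1..k+1}" and l: "l < n3"
    have "\<And>k0. k0 < n3 \<Longrightarrow> ip n1 s (\<lambda>p q. hat n3 (gkU A B n1 n2 s n3 i) p q k0) (\<lambda>p q. hat n3 (gkU A B n1 n2 s n3 j) p q k0) = (if i = j then 1 else 0)"
      using slice_orth[OF n _ assms] ij by auto
    from key[of l n1 "gkU A B n1 n2 s n3 i" "gkU A B n1 n2 s n3 j" i j, OF l this]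
    show "tinner n1 s n3 (gkU A B n1 n2 s n3 i) (gkU A B n1 n2 s n3 j) 0 0 l
             = (if i = j then tube_e else tube_o) 0 0 l"
      unfolding tinner_eval[OF n] by (simp add: ip_def)
  qed
qed

end
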